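(* Let $\alpha>-1$, $d\in\widetilde{D}$, $p=(L_n^{(\alpha)})_{n\in\mathbb{N}_0}$, $q=(L_n^{(\alpha+1)})_{n\in\mathbb{N}_0}$, and let $T=E_{p,d}$ be regarded as an operator in $H(q)$ with domain $\mathcal{P}_c$. For $g=\sum_kg_kq_k\in H(q)$: (i) $g\in D(T^* )$ iff $\sum_{k=0}^\infty\left|g_k\bar d_k+\sum_{t=0}^{k-1}(\bar d_t-\bar d_{t+1})g_t\right|^2<\infty$; (ii) for $g\in D(T^* )$, $T^*g=\sum_{k=0}^\infty\left[g_k\bar d_k+\sum_{t=0}^{k-1}(\bar d_t-\bar d_{t+1})g_t\right]q_k$; (iii) for fixed $j\in\mathbb{N}_0$, $q_j\in D(T^* )$ iff $\bar d_j-\bar d_{j+1}=0$; (iv) $E_{L^{(\alpha)},d}$ is unbounded as an operator in $H(q)$, for every $d\in\widetilde{D}$.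
   Context: $\mathcal{P}_c$ is the space of polynomials in one real variable with complex coefficients. For $\beta>-1$, $L_n^{(\beta)}(x)=\sum_{k=0}^n\frac{(-1)^k}{k!}\binom{n+\beta}{n-k}x^k$ is the generalized Laguerre polynomial. For a sequence $Q=(Q_n)$ of polynomials with $\deg Q_n=n$, $H(Q)$ is the completion of $\mathcal{P}_c$ with respect to the inner product making $(Q_n)$ orthonormal (so here the unnormalized $L_n^{(\alpha+1)}$ are orthonormal); $g\in H(Q)$ is written $g=\sum_kg_kQ_k$, $(g_k)\in\ell_2$. $\widetilde{D}$ is the set of non-constant sequences of non-zero complex numbers. For a polynomial sequence $p$ and $d\in\widetilde{D}$, $E_{p,d}$ is the linear map on $\mathcal{P}_c$ with $E_{p,d}(p_n)=d_np_n$. $T^*$ is the Hilbert space adjoint. *)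

theory Defs
  imports "HOL-Analysis.Analysis" "HOL-Computational_Algebra.Polynomial"
begin

definition laguerre :: "real \<Rightarrow> nat \<Rightarrow> complex poly" where
  "laguerre \<beta> n = (\<Sum>k\<le>n. monom (complex_of_real ((-1)^k / fact k * ((real n + \<beta>) gchoose (n - k)))) k)"

definition Dtilde :: "(nat \<Rightarrow> complex) set" where
  "Dtilde = {d. (\<forall>n. d n \<noteq> 0) \<and> \<not> (\<exists>c. \<forall>n. d n = c)}"

text \<open>Coordinates of a polynomial P with respect to a polynomial basis q (deg q_n = n):
  the unique finitely supported c with P = sum_k c_k q_k.\<close>
definition basis_coeffs :: "(nat \<Rightarrow> complex poly) \<Rightarrow> complex poly \<Rightarrow> nat \<Rightarrow> complex" where
  "basis_coeffs q P = (THE c. finite {k. c k \<noteq> 0} \<and> P = (\<Sum>k\<in>{k. c k \<noteq> 0}. smult (c k) (q k)))"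

definition Eop :: "(nat \<Rightarrow> complex poly) \<Rightarrow> (nat \<Rightarrow> complex) \<Rightarrow> complex poly \<Rightarrow> complex poly" where
  "Eop p d P = (\<Sum>k\<in>{k. basis_coeffs p P k \<noteq> 0}. smult (d k * basis_coeffs p P k) (p k))"

text \<open>H(q) is identified with the coefficient space l2: g = sum_k g_k q_k with (g_k) in l2.\<close>
definition l2seq :: "(nat \<Rightarrow> complex) \<Rightarrow> bool" where
  "l2seq g \<longleftrightarrow> summable (\<lambda>k. (cmod (g k))^2)"

definition hinner :: "(nat \<Rightarrow> complex) \<Rightarrow> (nat \<Rightarrow> complex) \<Rightarrow> complex" where
  "hinner g h = (\<Sum>k. g k * cnj (h k))"

definition hnorm :: "(nat \<Rightarrow> complex) \<Rightarrow> real" where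
  "hnorm g = sqrt (\<Sum>k. (cmod (g k))^2)"

definition adj_dom :: "(nat \<Rightarrow> complex poly) \<Rightarrow> (complex poly \<Rightarrow> complex poly) \<Rightarrow> (nat \<Rightarrow> complex) \<Rightarrow> bool" where
  "adj_dom q T g \<longleftrightarrow> l2seq g \<and>
     (\<exists>h. l2seq h \<and> (\<forall>P. hinner (basis_coeffs q (T P)) g = hinner (basis_coeffs q P) h))"

definition adj :: "(nat \<Rightarrow> complex poly) \<Rightarrow> (complex poly \<Rightarrow> complex poly) \<Rightarrow> (nat \<Rightarrow> complex) \<Rightarrow> nat \<Rightarrow> complex" where
  "adj q T g = (THE h. l2seq h \<and> (\<forall>P. hinner (basis_coeffs q (T P)) g = hinner (basis_coeffs q P) h))"

end

theory Submission
  imports Defs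
begin

lemma coeff_laguerre:
  "coeff (laguerre b n) i = (if i \<le> n then complex_of_real ((-1)^i / fact i * ((real n + b) gchoose (n - i))) else 0)"
  unfolding laguerre_def by (simp add: coeff_sum coeff_monom)

lemma laguerre_0: "laguerre b 0 = 1"
  by (simp add: poly_eq_iff coeff_laguerre coeff_1)

lemma laguerre_Suc:
  "laguerre a (Suc n) = laguerre (a+1) (Suc n) - laguerre (a+1) n"
proof (rule poly_eqI)
  fix i
  show "coeff (laguerre a (Suc n)) i = coeff (laguerre (a + 1) (Suc n) - laguerre (a + 1) n) i"
  proof (cases "i \<le> n")
    case True
    have e: "Suc n - i = Suc (n - i)" using True by simp
    have "(real (Suc n) + (a + 1)) gchoose Suc (n - i) =
          ((real (Suc n) + a) gchoose (n - i)) + ((real (Suc n) + a) gchoose Suc (n - i))"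
      using gbinomial_Suc_Suc[of "real (Suc n) + a" "n - i"] by (simp add: algebra_simps)
    moreover have "real n + (a + 1) = real (Suc n) + a" by simp
    ultimately show ?thesis using True
      by (simp add: coeff_laguerre e algebra_simps flip: of_real_diff)
  next
    case False
    then show ?thesis by (cases "i = Suc n") (auto simp: coeff_laguerre)
  qed
qed

lemma laguerre_deg: "degree (laguerre b n) \<le> n"
  by (rule degree_le) (simp add: coeff_laguerre)

lemma laguerre_lead: "coeff (laguerre b n) n \<noteq> 0"
  by (simp add: coeff_laguerre)

definition lincomb :: "(nat \<Rightarrow> complex poly) \<Rightarrow> (nat \<Rightarrow> complex) \<Rightarrow> nat \<Rightarrow> complex poly" where
  "lincomb q c N = (\<Sum>k\<le>N. smult (c k) (q k))"

definition isbasis :: "(nat \<Rightarrow> complex poly) \<Rightarrow> bool" where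
  "isbasis q \<longleftrightarrow> (\<forall>n. degree (q n) \<le> n \<and> coeff (q n) n \<noteq> 0)"

lemma isbasis_laguerre: "isbasis (laguerre b)"
  by (simp add: isbasis_def laguerre_deg laguerre_lead)

lemma lincomb_Suc: "lincomb q c (Suc N) = lincomb q c N + smult (c (Suc N)) (q (Suc N))"
  by (simp add: lincomb_def)

lemma lincomb_uniq:
  assumes B: "isbasis q"
  shows "(\<forall>k>N. c k = 0) \<Longrightarrow> lincomb q c N = 0 \<Longrightarrow> c k = 0"
proof (induction N arbitrary: k)
  case 0
  have "smult (c 0) (q 0) = 0" using 0 by (simp add: lincomb_def)
  moreover have "q 0 \<noteq> 0" using B unfolding isbasis_def by (metis coeff_0)
  ultimately show ?case using 0 by (cases k) auto
next
  case (Suc N)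
  have "coeff (lincomb q c (Suc N)) (Suc N) = (\<Sum>j\<le>Suc N. c j * coeff (q j) (Suc N))"
    by (simp add: lincomb_def coeff_sum)
  also have "\<dots> = c (Suc N) * coeff (q (Suc N)) (Suc N)"
  proof -
    have "\<forall>j\<le>N. coeff (q j) (Suc N) = 0"
      using B unfolding isbasis_def by (metis coeff_eq_0 le_imp_less_Suc order.strict_trans1)
    then show ?thesis by (simp add: atMost_Suc)
  qed
  finally have "c (Suc N) = 0" using Suc.prems B unfolding isbasis_def by simp
  then have "lincomb q c N = 0" using Suc.prems by (simp add: lincomb_Suc)
  moreover have "\<forall>k>N. c k = 0" using Suc.prems \<open>c (Suc N) = 0\<close>
    by (metis Suc_lessI)
  ultimately show ?case using Suc.IH by blast
qed

lemma lincomb_exists: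
  fixes n :: nat and P :: "complex poly"
  assumes B: "isbasis q"
  shows "degree P \<le> n \<Longrightarrow> \<exists>c::nat\<Rightarrow>complex. (\<forall>k>n. c k = 0) \<and> P = lincomb q c n"
proof (induction n arbitrary: P)
  case 0
  define c where "c = (\<lambda>k::nat. if k = 0 then coeff P 0 / coeff (q 0) 0 else 0)"
  have q0: "coeff (q 0) 0 \<noteq> 0" "degree (q 0) = 0" using B unfolding isbasis_def by auto
  have "P = smult (c 0) (q 0)"
  proof (rule poly_eqI)
    fix i show "coeff P i = coeff (smult (c 0) (q 0)) i"
      using q0 0 by (cases i) (auto simp: c_def coeff_eq_0)
  qed
  then have "P = lincomb q c 0" by (simp add: lincomb_def)
  moreover have "\<forall>k>0. c k = 0" by (simp add: c_def)
  ultimately show ?case by blast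
next
  case (Suc n)
  define a where "a = coeff P (Suc n) / coeff (q (Suc n)) (Suc n)"
  define Q where "Q = P - smult a (q (Suc n))"
  have qs: "coeff (q (Suc n)) (Suc n) \<noteq> 0" "degree (q (Suc n)) \<le> Suc n" using B unfolding isbasis_def by auto
  have "degree Q \<le> n"
  proof (rule degree_le, intro allI impI)
    fix i assume "n < i"
    show "coeff Q i = 0"
    proof (cases "i = Suc n")
      case True then show ?thesis using qs by (simp add: Q_def a_def)
    next
      case False then have "i > Suc n" using \<open>n < i\<close> by simp
      then show ?thesis using qs Suc.prems by (simp add: Q_def coeff_eq_0)
    qed
  qed
  from Suc.IH[OF this] obtain c where c: "\<forall>k>n. c k = 0" "Q = lincomb q c n" by blast
  define c' where "c' = c(Suc n := a)"
  have "lincomb q c' n = lincomb q c n" unfolding lincomb_def c'_def by (intro sum.cong) auto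
  then have "lincomb q c' (Suc n) = P" using c by (simp add: lincomb_Suc c'_def Q_def) (metis diff_add_cancel)
  moreover have "\<forall>k>Suc n. c' k = 0" using c by (simp add: c'_def)
  ultimately show ?case by blast
qed

lemma lincomb_extend:
  assumes "\<forall>k>N. c k = 0" "N \<le> M"
  shows "lincomb q c M = lincomb q c N"
  unfolding lincomb_def
proof (rule sum.mono_neutral_right)
  show "{..N} \<subseteq> {..M}" using assms(2) by auto
  show "\<forall>i\<in>{..M} - {..N}. smult (c i) (q i) = 0" using assms(1) by simp
qed auto

lemma lincomb_supp:
  assumes "\<forall>k>N. c k = 0"
  shows "lincomb q c N = (\<Sum>k\<in>{k. c k \<noteq> 0}. smult (c k) (q k))"
  unfolding lincomb_def
proof (rule sum.mono_neutral_right)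
  show "{k. c k \<noteq> 0} \<subseteq> {..N}"
  proof
    fix k assume "k \<in> {k. c k \<noteq> 0}"
    then have "\<not> k > N" using assms by auto
    then show "k \<in> {..N}" by simp
  qed
qed auto

lemma lincomb_diff: "lincomb q (\<lambda>k. c k - c' k) N = lincomb q c N - lincomb q c' N"
  by (simp add: lincomb_def smult_diff_left sum_subtractf)

lemma basis_coeffs_char:
  assumes B: "isbasis q" and c: "\<forall>k>N. c k = 0" and P: "P = lincomb q c N"
  shows "basis_coeffs q P = c"
  unfolding basis_coeffs_def
proof (rule the_equality)
  show "finite {k. c k \<noteq> 0} \<and> P = (\<Sum>k\<in>{k. c k \<noteq> 0}. smult (c k) (q k))"
  proof
    show "finite {k. c k \<noteq> 0}"
    proof (rule finite_subset[of _ "{..N}"])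
      show "{k. c k \<noteq> 0} \<subseteq> {..N}"
      proof
        fix k assume "k \<in> {k. c k \<noteq> 0}"
        then have "\<not> k > N" using c by auto
        then show "k \<in> {..N}" by simp
      qed
    qed simp
    show "P = (\<Sum>k\<in>{k. c k \<noteq> 0}. smult (c k) (q k))" using P lincomb_supp[OF c] by simp
  qed
next
  fix c' assume h: "finite {k. c' k \<noteq> 0} \<and> P = (\<Sum>k\<in>{k. c' k \<noteq> 0}. smult (c' k) (q k))"
  then obtain M where M: "\<forall>k\<in>{k. c' k \<noteq> 0}. k \<le> M"
    using finite_nat_set_iff_bounded_le by blast
  have c'M: "\<forall>k>M. c' k = 0" using M by auto
  define K where "K = max N M"
  have "lincomb q c' K = lincomb q c' M" using lincomb_extend[OF c'M, of K] by (simp add: K_def)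
  also have "\<dots> = P" using h lincomb_supp[OF c'M] by simp
  finally have "lincomb q c' K = P" .
  moreover have "lincomb q c K = P" using P lincomb_extend[OF c, of K] by (simp add: K_def)
  ultimately have "lincomb q (\<lambda>k. c' k - c k) K = 0" by (simp add: lincomb_diff)
  moreover have "\<forall>k>K. c' k - c k = 0" using c c'M by (simp add: K_def)
  ultimately have "\<And>k. c' k - c k = 0" using lincomb_uniq[OF B, of K "\<lambda>k. c' k - c k"] by simp
  then show "c' = c" by auto
qed

lemma basis_coeffs_ex:
  assumes B: "isbasis q"
  shows "\<exists>N. (\<forall>k>N. basis_coeffs q P k = 0) \<and> P = lincomb q (basis_coeffs q P) N"
proof -
  obtain c where c: "\<forall>k>degree P. c k = 0" "P = lincomb q c (degree P)"
    using lincomb_exists[OF B, of P "degree P"] by blast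
  have "basis_coeffs q P = c" by (rule basis_coeffs_char[OF B c])
  then show ?thesis using c by blast
qed


definition Hf :: "(nat \<Rightarrow> complex) \<Rightarrow> (nat \<Rightarrow> complex) \<Rightarrow> nat \<Rightarrow> complex" where
  "Hf d g = (\<lambda>k. g k * cnj (d k) + (\<Sum>t<k. (cnj (d t) - cnj (d (Suc t))) * g t))"

lemma shift:
  assumes p0: "p 0 = q 0" and pS: "\<And>n. p (Suc n) = q (Suc n) - q n"
  shows "lincomb p \<beta> N = lincomb q (\<lambda>n. \<beta> n - \<beta> (Suc n)) N + smult (\<beta> (Suc N)) (q N)"
proof (induction N)
  case 0
  then show ?case by (simp add: lincomb_def p0 smult_diff_left)
next
  case (Suc N)
  then show ?case by (simp add: lincomb_Suc pS smult_diff_left smult_diff_right algebra_simps)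
qed

lemma Eop_lincomb:
  assumes bN: "\<forall>k>N. basis_coeffs p P k = 0"
  shows "Eop p d P = lincomb p (\<lambda>k. d k * basis_coeffs p P k) N"
  unfolding Eop_def lincomb_def
proof (rule sum.mono_neutral_left)
  show "{k. basis_coeffs p P k \<noteq> 0} \<subseteq> {..N}"
  proof
    fix k assume "k \<in> {k. basis_coeffs p P k \<noteq> 0}"
    then have "\<not> k > N" using bN by auto
    then show "k \<in> {..N}" by simp
  qed
qed auto

lemma hinner_fin:
  assumes "\<forall>k>N. c k = 0"
  shows "hinner c h = (\<Sum>k\<le>N. c k * cnj (h k))"
  unfolding hinner_def
proof (rule suminf_finite)
  fix n assume "n \<notin> {..N}" then show "c n * cnj (h n) = 0" using assms by simp
qed simp

lemma abel:
  "(\<Sum>k\<le>N. (b k - b (Suc k)) * (G k * d k + (\<Sum>t<k. (d t - d (Suc t)) * G t)))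
     + b (Suc N) * (G N * d N + (\<Sum>t<N. (d t - d (Suc t)) * G t))
   = (\<Sum>k\<le>N. (d k * b k - d (Suc k) * b (Suc k)) * G k) + b (Suc N) * d (Suc N) * G N"
  for b G d :: "nat \<Rightarrow> complex"
proof (induction N)
  case 0 then show ?case by (simp add: algebra_simps)
next
  case (Suc N)
  then show ?case by (simp add: algebra_simps)
qed

lemma cnj_Hf: "cnj (Hf d g k) = cnj (g k) * d k + (\<Sum>t<k. (d t - d (Suc t)) * cnj (g t))"
  by (simp add: Hf_def)

lemma KEY:
  fixes a :: real and d g :: "nat \<Rightarrow> complex" and P :: "complex poly"
  shows "hinner (basis_coeffs (laguerre (a+1)) (Eop (laguerre a) d P)) g
       = hinner (basis_coeffs (laguerre (a+1)) P) (Hf d g)"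
proof -
  define p where "p = laguerre a"
  define q where "q = laguerre (a+1)"
  have Bp: "isbasis p" and Bq: "isbasis q" by (simp_all add: p_def q_def isbasis_laguerre)
  define b where "b = basis_coeffs p P"
  obtain N where bN: "\<forall>k>N. b k = 0" and Pb: "P = lincomb p b N"
    using basis_coeffs_ex[OF Bp, of P] unfolding b_def by blast
  have p0: "p 0 = q 0" by (simp add: p_def q_def laguerre_0)
  have pS: "\<And>n. p (Suc n) = q (Suc n) - q n" unfolding p_def q_def by (rule laguerre_Suc)
  have E: "Eop p d P = lincomb p (\<lambda>k. d k * b k) N"
    using Eop_lincomb[of N p P d] bN unfolding b_def by simp
  define e where "e = (\<lambda>n. d n * b n - d (Suc n) * b (Suc n))"
  define c where "c = (\<lambda>n. b n - b (Suc n))"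
  have eN: "\<forall>k>N. e k = 0" using bN by (simp add: e_def)
  have cN: "\<forall>k>N. c k = 0" using bN by (simp add: c_def)
  have "Eop p d P = lincomb q e N"
    using E shift[OF p0 pS, of "\<lambda>k. d k * b k" N] bN by (simp add: e_def)
  then have ce: "basis_coeffs q (Eop p d P) = e" using basis_coeffs_char[OF Bq eN] by simp
  have "P = lincomb q c N"
    using Pb shift[OF p0 pS, of b N] bN by (simp add: c_def)
  then have cc: "basis_coeffs q P = c" using basis_coeffs_char[OF Bq cN] by simp
  have "hinner (basis_coeffs q (Eop p d P)) g = (\<Sum>k\<le>N. e k * cnj (g k))"
    using ce hinner_fin[OF eN] by simp
  also have "\<dots> = (\<Sum>k\<le>N. c k * cnj (Hf d g k))"
    using abel[of b "\<lambda>k. cnj (g k)" d N] bN by (simp add: e_def c_def cnj_Hf)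
  also have "\<dots> = hinner (basis_coeffs q P) (Hf d g)"
    using cc hinner_fin[OF cN] by simp
  finally show ?thesis by (simp add: p_def q_def)
qed

lemma delta_coeffs:
  assumes B: "isbasis q"
  shows "basis_coeffs q (q n) = (\<lambda>k. if k = n then 1 else 0)"
proof (rule basis_coeffs_char[OF B, of n])
  show "\<forall>k>n. (if k = n then 1 else 0) = (0::complex)" by simp
  have "lincomb q (\<lambda>k. if k = n then 1 else 0) n = (\<Sum>k\<le>n. if k = n then q k else 0)"
    unfolding lincomb_def by (rule sum.cong) auto
  then show "q n = lincomb q (\<lambda>k. if k = n then 1 else 0) n" by simp
qed

lemma hinner_delta: "hinner (\<lambda>k. if k = n then 1 else 0) h = cnj (h n)"
  unfolding hinner_def by (subst suminf_finite[of "{n}"]) auto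

lemma UNIQ:
  assumes B: "isbasis q" and h: "\<forall>P. hinner (basis_coeffs q P) h = hinner (basis_coeffs q P) h'"
  shows "h = h'"
proof
  fix n
  have "cnj (h n) = cnj (h' n)" using h[rule_format, of "q n"] by (simp add: delta_coeffs[OF B] hinner_delta)
  then show "h n = h' n" by simp
qed

lemma adj_dom_iff:
  "adj_dom (laguerre (a+1)) (Eop (laguerre a) d) g \<longleftrightarrow> l2seq g \<and> l2seq (Hf d g)"
  unfolding adj_dom_def KEY
proof
  assume L: "l2seq g \<and> (\<exists>h. l2seq h \<and> (\<forall>P. hinner (basis_coeffs (laguerre (a + 1)) P) (Hf d g) =
                  hinner (basis_coeffs (laguerre (a + 1)) P) h))"
  then obtain h where h1: "l2seq h" and h2: "\<forall>P. hinner (basis_coeffs (laguerre (a + 1)) P) (Hf d g) =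
                  hinner (basis_coeffs (laguerre (a + 1)) P) h" by blast
  have "Hf d g = h" by (rule UNIQ[OF isbasis_laguerre h2])
  then show "l2seq g \<and> l2seq (Hf d g)" using L h1 by simp
next
  assume "l2seq g \<and> l2seq (Hf d g)"
  then show "l2seq g \<and> (\<exists>h. l2seq h \<and> (\<forall>P. hinner (basis_coeffs (laguerre (a + 1)) P) (Hf d g) =
                  hinner (basis_coeffs (laguerre (a + 1)) P) h))" by blast
qed

lemma adj_eq:
  assumes "adj_dom (laguerre (a+1)) (Eop (laguerre a) d) g"
  shows "adj (laguerre (a+1)) (Eop (laguerre a) d) g = Hf d g"
  unfolding adj_def KEY
proof (rule the_equality)
  show "l2seq (Hf d g) \<and> (\<forall>P. hinner (basis_coeffs (laguerre (a + 1)) P) (Hf d g) =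
                  hinner (basis_coeffs (laguerre (a + 1)) P) (Hf d g))"
    using assms adj_dom_iff by blast
  fix h assume H: "l2seq h \<and> (\<forall>P. hinner (basis_coeffs (laguerre (a + 1)) P) (Hf d g) =
                  hinner (basis_coeffs (laguerre (a + 1)) P) h)"
  have "Hf d g = h" by (rule UNIQ[OF isbasis_laguerre]) (use H in blast)
  then show "h = Hf d g" by simp
qed


lemma sum_delta_mult: "(\<Sum>t<(k::nat). X t * (if t = j then 1 else 0)) = (if j < k then X j else (0::complex))"
proof -
  have "(\<Sum>t<k. X t * (if t = j then 1 else 0)) = (\<Sum>t\<in>{..<k}. if t = j then X t else 0)"
    by (rule sum.cong) auto
  also have "\<dots> = (if j \<in> {..<k} then X j else 0)" by (rule sum.delta) simp
  finally show ?thesis by simp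
qed

lemma Hf_delta:
  "Hf d (\<lambda>k. if k = j then 1 else 0) k =
     (if k = j then cnj (d j) else 0) + (if j < k then cnj (d j) - cnj (d (Suc j)) else 0)"
  unfolding Hf_def by (simp add: sum_delta_mult[of "\<lambda>t. cnj (d t) - cnj (d (Suc t))"])

lemma l2_delta: "l2seq (\<lambda>k. if k = j then 1 else 0)"
  unfolding l2seq_def by (rule summable_finite[of "{j}"]) auto

lemma l2_Hf_delta:
  "l2seq (Hf d (\<lambda>k. if k = j then 1 else 0)) \<longleftrightarrow> cnj (d j) - cnj (d (Suc j)) = 0"
proof
  assume L: "l2seq (Hf d (\<lambda>k. if k = j then 1 else 0))"
  define D where "D = cnj (d j) - cnj (d (Suc j))"
  have lim: "(\<lambda>k. (cmod (Hf d (\<lambda>k. if k = j then 1 else 0) k))^2) \<longlonglongrightarrow> 0"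
    using L unfolding l2seq_def by (rule summable_LIMSEQ_zero)
  have ev: "eventually (\<lambda>k. (cmod (Hf d (\<lambda>k. if k = j then 1 else 0) k))^2 = (cmod D)^2) sequentially"
    by (rule eventually_sequentiallyI[of "Suc j"]) (simp add: Hf_delta D_def)
  have "(\<lambda>k. (cmod D)^2) \<longlonglongrightarrow> 0" using lim tendsto_cong[OF ev] by (simp only:)
  then have "(cmod D)^2 = 0" by (simp add: LIMSEQ_const_iff)
  then show "cnj (d j) - cnj (d (Suc j)) = 0" by (simp add: D_def)
next
  assume R: "cnj (d j) - cnj (d (Suc j)) = 0"
  show "l2seq (Hf d (\<lambda>k. if k = j then 1 else 0))"
    unfolding l2seq_def by (rule summable_finite[of "{j}"]) (use R in \<open>auto simp: Hf_delta\<close>)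
qed

lemma nonconst:
  assumes "d \<in> Dtilde" shows "\<exists>j. d j \<noteq> d (Suc j)"
proof (rule ccontr)
  assume "\<not> (\<exists>j. d j \<noteq> d (Suc j))"
  then have h: "\<And>j. d (Suc j) = d j" by auto
  have "\<forall>n. d n = d 0"
  proof
    fix n show "d n = d 0" by (induction n) (simp_all add: h)
  qed
  then show False using assms unfolding Dtilde_def by blast
qed

lemma arith_contra:
  fixes m C :: real
  assumes m: "m > 0" and h: "\<And>N::nat. N \<ge> 1 \<Longrightarrow> real N * m \<le> C * sqrt (real N)"
  shows False
proof -
  define N where "N = nat \<lceil>C^2 / m^2\<rceil> + 1"
  have N1: "N \<ge> 1" by (simp add: N_def)
  have Ngt: "real N > C^2 / m^2" unfolding N_def by linarith
  have hN: "real N * m \<le> C * sqrt (real N)" using h[OF N1] .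
  have pos: "real N > 0" using N1 by simp
  have "C * sqrt (real N) \<le> \<bar>C\<bar> * sqrt (real N)" by (simp add: mult_right_mono)
  with hN have a: "real N * m \<le> \<bar>C\<bar> * sqrt (real N)" by linarith
  have "(real N * m)^2 \<le> (\<bar>C\<bar> * sqrt (real N))^2"
    using a pos m by (intro power_mono) auto
  then have "real N^2 * m^2 \<le> C^2 * real N" using pos by (simp add: power_mult_distrib)
  then have "real N * m^2 \<le> C^2" using pos by (simp add: power2_eq_square)
  then have "real N \<le> C^2 / m^2" using m by (simp add: field_simps)
  then show False using Ngt by linarith
qed

lemma unbounded:
  assumes dD: "d \<in> Dtilde"
  shows "\<not> (\<exists>C. \<forall>P. hnorm (basis_coeffs (laguerre (a+1)) (Eop (laguerre a) d P))
                \<le> C * hnorm (basis_coeffs (laguerre (a+1)) P))"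
proof
  assume "\<exists>C. \<forall>P. hnorm (basis_coeffs (laguerre (a+1)) (Eop (laguerre a) d P))
                \<le> C * hnorm (basis_coeffs (laguerre (a+1)) P)"
  then obtain C where hC: "\<And>P. hnorm (basis_coeffs (laguerre (a+1)) (Eop (laguerre a) d P))
                \<le> C * hnorm (basis_coeffs (laguerre (a+1)) P)" by blast
  obtain j where dj: "d j \<noteq> d (Suc j)" using nonconst[OF dD] by blast
  define q where "q = laguerre (a+1)"
  have Bq: "isbasis q" by (simp add: q_def isbasis_laguerre)
  define \<delta> where "\<delta> = (\<lambda>k::nat. if k = j then (1::complex) else 0)"
  define D where "D = d j - d (Suc j)"
  have Hd: "\<And>k. k > j \<Longrightarrow> cnj (Hf d \<delta> k) = D"
    by (simp add: \<delta>_def Hf_delta D_def)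
  have main: "real N * cmod D \<le> C * sqrt (real N)" if N1: "N \<ge> 1" for N :: nat
  proof -
    define c where "c = (\<lambda>k. if j < k \<and> k \<le> j+N then (1::complex) else 0)"
    define P where "P = lincomb q c (j+N)"
    have cc: "basis_coeffs q P = c"
      by (rule basis_coeffs_char[OF Bq, of "j+N"]) (auto simp: c_def P_def)
    have "(\<Sum>k. (cmod (c k))^2) = (\<Sum>k\<in>{Suc j..j+N}. (cmod (c k))^2)"
      by (rule suminf_finite) (auto simp: c_def)
    also have "\<dots> = (\<Sum>k\<in>{Suc j..j+N}. 1)"
      by (rule sum.cong) (auto simp: c_def)
    also have "\<dots> = real N" by simp
    finally have hn: "hnorm c = sqrt (real N)" by (simp add: hnorm_def)
    define E where "E = basis_coeffs q (Eop (laguerre a) d P)"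
    have key: "hinner E \<delta> = hinner c (Hf d \<delta>)"
      using KEY[of a d P \<delta>] cc by (simp add: E_def q_def)
    have lhs: "hinner E \<delta> = E j"
      unfolding hinner_def by (subst suminf_finite[of "{j}"]) (auto simp: \<delta>_def)
    have "hinner c (Hf d \<delta>) = (\<Sum>k\<in>{Suc j..j+N}. c k * cnj (Hf d \<delta> k))"
      unfolding hinner_def by (rule suminf_finite) (auto simp: c_def)
    also have "\<dots> = (\<Sum>k\<in>{Suc j..j+N}. D)"
      by (rule sum.cong) (auto simp: c_def Hd)
    also have "\<dots> = of_nat N * D" by simp
    finally have Ej: "E j = of_nat N * D" using key lhs by simp
    obtain M where EM: "\<forall>k>M. E k = 0"
      using basis_coeffs_ex[OF Bq] unfolding E_def by blast
    have sm: "summable (\<lambda>k. (cmod (E k))^2)"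
      by (rule summable_finite[of "{..M}"]) (use EM in auto)
    have "(\<Sum>k\<in>{j}. (cmod (E k))^2) \<le> (\<Sum>k. (cmod (E k))^2)"
      by (rule sum_le_suminf[OF sm]) auto
    then have "cmod (E j) \<le> hnorm E" unfolding hnorm_def by (simp add: real_le_rsqrt)
    also have "\<dots> \<le> C * hnorm c" using hC[of P] cc by (simp add: E_def q_def)
    finally show ?thesis using Ej hn by (simp add: norm_mult)
  qed
  have "cmod D > 0" using dj by (simp add: D_def)
  then show False using arith_contra main by blast
qed

theorem theorem4:
  fixes \<alpha> :: real and d :: "nat \<Rightarrow> complex"
  assumes "\<alpha> > -1" and "d \<in> Dtilde"
  defines "p \<equiv> laguerre \<alpha>" and "q \<equiv> laguerre (\<alpha> + 1)" and "T \<equiv> Eop (laguerre \<alpha>) d"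
  shows "(\<forall>g. l2seq g \<longrightarrow>
            (adj_dom q T g \<longleftrightarrow>
             summable (\<lambda>k. (cmod (g k * cnj (d k) + (\<Sum>t<k. (cnj (d t) - cnj (d (Suc t))) * g t)))^2)))
       \<and> (\<forall>g. adj_dom q T g \<longrightarrow>
            adj q T g = (\<lambda>k. g k * cnj (d k) + (\<Sum>t<k. (cnj (d t) - cnj (d (Suc t))) * g t)))
       \<and> (\<forall>j. adj_dom q T (basis_coeffs q (q j)) \<longleftrightarrow> cnj (d j) - cnj (d (Suc j)) = 0)
       \<and> (\<forall>d'\<in>Dtilde. \<not> (\<exists>C. \<forall>P. hnorm (basis_coeffs q (Eop p d' P)) \<le> C * hnorm (basis_coeffs q P)))"
proof (intro conjI allI impI ballI)
  fix g :: "nat \<Rightarrow> complex" assume g: "l2seq g"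
  show "adj_dom q T g \<longleftrightarrow>
             summable (\<lambda>k. (cmod (g k * cnj (d k) + (\<Sum>t<k. (cnj (d t) - cnj (d (Suc t))) * g t)))^2)"
    using adj_dom_iff[of \<alpha> d g] g unfolding q_def T_def l2seq_def Hf_def by simp
next
  fix g :: "nat \<Rightarrow> complex" assume g: "adj_dom q T g"
  show "adj q T g = (\<lambda>k. g k * cnj (d k) + (\<Sum>t<k. (cnj (d t) - cnj (d (Suc t))) * g t))"
    using adj_eq[of \<alpha> d g] g unfolding q_def T_def Hf_def by simp
next
  fix j
  show "adj_dom q T (basis_coeffs q (q j)) \<longleftrightarrow> cnj (d j) - cnj (d (Suc j)) = 0"
    unfolding q_def T_def delta_coeffs[OF isbasis_laguerre] adj_dom_iff
    using l2_delta[of j] l2_Hf_delta[of d j] by simp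
next
  fix d' assume "d' \<in> Dtilde"
  then show "\<not> (\<exists>C. \<forall>P. hnorm (basis_coeffs q (Eop p d' P)) \<le> C * hnorm (basis_coeffs q P))"
    using unbounded[of d' \<alpha>] unfolding p_def q_def by simp
qed

end
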